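(* Let $G$ be an undirected graph with double cover $H$, let $\alpha\in(0,1]$, $s\in\mathbb{R}^{2n}_{\ge0}$ and a nonnegative residual $r\in\mathbb{R}^{2n}_{\ge0}$, and let $\mathrm{apr}(\alpha,s,r)$ be the approximate PageRank vector defined with respect to $H$. Then $p=\sigma\circ\mathrm{apr}(\alpha,s,r)$ satisfies, for every $u\in V_G$, \[p(u_1)\le\alpha\big(s(u_1)+r(u_2)\big)+(1-\alpha)(pW)(u_1),\qquad p(u_2)\le\alpha\big(s(u_2)+r(u_1)\big)+(1-\alpha)(pW)(u_2).\]
   Context: $G$ has $n$ vertices. The double cover $H$ has vertices $v_1,v_2$ per $v\in V_G$ and edges $\{u_1,v_2\},\{u_2,v_1\}$ per $\{u,v\}\in E_G$. $W=\frac12(I+D_H^{-1}A_H)$ is the lazy random walk matrix of $H$ (row vectors act by $p\mapsto pW$). $\mathrm{pr}(\alpha,s)$ is the unique solution of $\mathrm{pr}=\alpha s+(1-\alpha)\mathrm{pr}\,W$; $\mathrm{apr}(\alpha,s,r)$ is the vector $q$ with $q+\mathrm{pr}(\alpha,r)=\mathrm{pr}(\alpha,s)$. The simplify operator is given by $(\sigma\circ p)(u_1)=\max(0,p(u_1)-p(u_2))$, $(\sigma\circ p)(u_2)=\max(0,p(u_2)-p(u_1))$ for $p\in\mathbb{R}^{2n}$. *)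

theory Defs
  imports Complex_Main
begin

text \<open>Double cover H: vertex set 'v \<times> bool, where (u, False) is u_1 and (u, True) is u_2.\<close>

definition dc_adj :: "('v \<Rightarrow> 'v \<Rightarrow> bool) \<Rightarrow> ('v \<times> bool) \<Rightarrow> ('v \<times> bool) \<Rightarrow> bool" where
  "dc_adj E x y = (E (fst x) (fst y) \<and> snd x \<noteq> snd y)"

definition dc_deg :: "('v \<Rightarrow> 'v \<Rightarrow> bool) \<Rightarrow> ('v \<times> bool) \<Rightarrow> real" where
  "dc_deg E x = real (card {y. dc_adj E x y})"

definition lazy_walk :: "('v \<Rightarrow> 'v \<Rightarrow> bool) \<Rightarrow> ('v \<times> bool) \<Rightarrow> ('v \<times> bool) \<Rightarrow> real" where
  "lazy_walk E x y = (1/2) * ((if x = y then 1 else 0)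
        + (if dc_adj E x y then 1 else 0) / dc_deg E x)"

definition vecmat :: "('a::finite \<Rightarrow> real) \<Rightarrow> ('a \<Rightarrow> 'a \<Rightarrow> real) \<Rightarrow> 'a \<Rightarrow> real" where
  "vecmat p M y = (\<Sum>x\<in>UNIV. p x * M x y)"

definition pagerank :: "('v::finite \<Rightarrow> 'v \<Rightarrow> bool) \<Rightarrow> real \<Rightarrow> ('v \<times> bool \<Rightarrow> real) \<Rightarrow> ('v \<times> bool \<Rightarrow> real)" where
  "pagerank E \<alpha> s = (THE pr. \<forall>x. pr x = \<alpha> * s x + (1 - \<alpha>) * vecmat pr (lazy_walk E) x)"

definition apr :: "('v::finite \<Rightarrow> 'v \<Rightarrow> bool) \<Rightarrow> real \<Rightarrow> ('v \<times> bool \<Rightarrow> real) \<Rightarrow> ('v \<times> bool \<Rightarrow> real) \<Rightarrow> ('v \<times> bool \<Rightarrow> real)" where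
  "apr E \<alpha> s r = (\<lambda>x. pagerank E \<alpha> s x - pagerank E \<alpha> r x)"

definition simplify :: "('v \<times> bool \<Rightarrow> real) \<Rightarrow> ('v \<times> bool \<Rightarrow> real)" where
  "simplify p = (\<lambda>(u, i). max 0 (p (u, i) - p (u, \<not> i)))"

end

theory Submission imports Defs "HOL-Analysis.Analysis" begin

lemma kernel0:
  fixes W :: "'a::finite \<Rightarrow> 'a \<Rightarrow> real"
  assumes W0: "\<forall>x y. 0 \<le> W x y" and W1: "\<forall>x. (\<Sum>y\<in>UNIV. W x y) \<le> 1"
    and a: "0 < \<alpha>" "\<alpha> \<le> 1"
    and v: "\<forall>y. v y = (1-\<alpha>) * vecmat v W y"
  shows "v = (\<lambda>_. 0)"
proof -
  have "(\<Sum>y\<in>UNIV. \<bar>v y\<bar>) \<le> (\<Sum>y\<in>UNIV. (1-\<alpha>) * (\<Sum>x\<in>UNIV. \<bar>v x\<bar> * W x y))"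
  proof (rule sum_mono)
    fix y
    have "\<bar>v y\<bar> = (1-\<alpha>) * \<bar>vecmat v W y\<bar>" using v a by (metis abs_mult abs_of_nonneg diff_ge_0_iff_ge)
    also have "\<bar>vecmat v W y\<bar> \<le> (\<Sum>x\<in>UNIV. \<bar>v x\<bar> * W x y)"
      unfolding vecmat_def using sum_abs[of "\<lambda>x. v x * W x y" UNIV] W0 by (simp add: abs_mult)
    finally show "\<bar>v y\<bar> \<le> (1-\<alpha>) * (\<Sum>x\<in>UNIV. \<bar>v x\<bar> * W x y)" using a by (simp add: mult_left_mono)
  qed
  also have "\<dots> = (1-\<alpha>) * (\<Sum>y\<in>UNIV. \<Sum>x\<in>UNIV. \<bar>v x\<bar> * W x y)"
    by (rule sum_distrib_left[symmetric])
  also have "\<dots> = (1-\<alpha>) * (\<Sum>x\<in>UNIV. \<Sum>y\<in>UNIV. \<bar>v x\<bar> * W x y)"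
    by (subst sum.swap) (rule refl)
  also have "\<dots> = (1-\<alpha>) * (\<Sum>x\<in>UNIV. \<bar>v x\<bar> * (\<Sum>y\<in>UNIV. W x y))"
    by (simp only: sum_distrib_left)
  also have "\<dots> \<le> (1-\<alpha>) * (\<Sum>x\<in>UNIV. \<bar>v x\<bar>)"
    using a W1 by (intro mult_left_mono sum_mono) (auto intro: mult_left_le)
  finally have "\<alpha> * (\<Sum>x\<in>UNIV. \<bar>v x\<bar>) \<le> 0" by (simp add: algebra_simps)
  then have "(\<Sum>x\<in>UNIV. \<bar>v x\<bar>) = 0"
  proof -
    have "0 \<le> (\<Sum>x\<in>UNIV. \<bar>v x\<bar>)" by (rule sum_nonneg) simp
    with \<open>\<alpha> * (\<Sum>x\<in>UNIV. \<bar>v x\<bar>) \<le> 0\<close> a show ?thesis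
      by (meson antisym mult_le_0_iff not_less)
  qed
  then show ?thesis by (auto simp: sum_nonneg_eq_0_iff)
qed

lemma fix_ex1:
  fixes W :: "'a::finite \<Rightarrow> 'a \<Rightarrow> real"
  assumes W0: "\<forall>x y. 0 \<le> W x y" and W1: "\<forall>x. (\<Sum>y\<in>UNIV. W x y) \<le> 1"
    and a: "0 < \<alpha>" "\<alpha> \<le> 1"
  shows "\<exists>!pr. \<forall>x. pr x = \<alpha> * s x + (1 - \<alpha>) * vecmat pr W x"
proof -
  define F :: "real^'a \<Rightarrow> real^'a" where
    "F = (\<lambda>v. \<chi> y. v$y - (1-\<alpha>) * (\<Sum>x\<in>UNIV. v$x * W x y))"
  have lin: "linear F"
  proof (rule linearI)
    fix b1 b2 :: "real^'a"
    have "\<And>i. (\<Sum>x\<in>UNIV. (b1 + b2)$x * W x i) = (\<Sum>x\<in>UNIV. b1$x * W x i) + (\<Sum>x\<in>UNIV. b2$x * W x i)"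
      by (simp add: distrib_right sum.distrib)
    then show "F (b1 + b2) = F b1 + F b2"
      by (simp add: F_def vec_eq_iff right_diff_distrib distrib_left)
  next
    fix c :: real and b :: "real^'a"
    have "\<And>i. (\<Sum>x\<in>UNIV. (c *\<^sub>R b)$x * W x i) = c * (\<Sum>x\<in>UNIV. b$x * W x i)"
      by (simp add: sum_distrib_left mult.assoc)
    then show "F (c *\<^sub>R b) = c *\<^sub>R F b"
      by (simp add: F_def vec_eq_iff right_diff_distrib)
  qed
  have inj: "inj F"
  proof (rule injI)
    fix a b assume "F a = F b"
    define w where "w = a - b"
    have d: "F w = F a - F b" unfolding w_def by (rule linear_diff[OF lin])
    have Fw: "F w = 0" using d \<open>F a = F b\<close> by simp
    have "\<forall>y. (\<lambda>y. w$y) y = (1-\<alpha>) * vecmat (\<lambda>y. w$y) W y"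
    proof
      fix y
      have "(F w)$y = w$y - (1-\<alpha>) * (\<Sum>x\<in>UNIV. w$x * W x y)" unfolding F_def by (rule vec_lambda_beta)
      moreover have "(F w)$y = 0" using Fw by simp
      ultimately show "(\<lambda>y. w$y) y = (1-\<alpha>) * vecmat (\<lambda>y. w$y) W y" unfolding vecmat_def by simp
    qed
    from kernel0[OF W0 W1 a this] have "w = 0" by (simp add: vec_eq_iff fun_eq_iff)
    then show "a = b" unfolding w_def by simp
  qed
  have "surj F" using linear_inj_imp_surj[OF lin inj] .
  then obtain v where vF: "F v = (\<chi> x. \<alpha> * s x)" by (metis surjD)
  show ?thesis
  proof (rule ex1I[of _ "\<lambda>x. v$x"])
    show "\<forall>x. v $ x = \<alpha> * s x + (1 - \<alpha>) * vecmat (($) v) W x"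
    proof
      fix y
      have "(F v)$y = v$y - (1-\<alpha>) * (\<Sum>x\<in>UNIV. v$x * W x y)" unfolding F_def by (rule vec_lambda_beta)
      moreover have "(F v)$y = \<alpha> * s y" using vF by simp
      ultimately show "v $ y = \<alpha> * s y + (1 - \<alpha>) * vecmat (($) v) W y" unfolding vecmat_def by simp
    qed
  next
    fix pr assume pr: "\<forall>x. pr x = \<alpha> * s x + (1 - \<alpha>) * vecmat pr W x"
    have "F (\<chi> x. pr x) = F v"
    proof (subst vec_eq_iff, rule allI)
      fix y
      have "(F (\<chi> x. pr x))$y = pr y - (1-\<alpha>) * (\<Sum>x\<in>UNIV. pr x * W x y)" unfolding F_def by simp
      also have "\<dots> = \<alpha> * s y" using pr unfolding vecmat_def by (metis add_diff_cancel_right')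
      also have "\<dots> = (F v)$y" using vF by simp
      finally show "(F (\<chi> x. pr x))$y = (F v)$y" .
    qed
    then have eqv: "(\<chi> x. pr x) = v" using inj by (rule injD[rotated])
    have "\<And>x. pr x = v$x" by (subst eqv[symmetric]) (rule vec_lambda_beta[symmetric])
    then show "pr = ($) v" by (rule ext)
  qed
qed
definition fl :: "'v \<times> bool \<Rightarrow> 'v \<times> bool" where "fl x = (fst x, \<not> snd x)"

lemma fl_fl[simp]: "fl (fl x) = x" by (simp add: fl_def)

lemma inj_fl: "inj fl" by (metis fl_fl injI)

lemma adj_fl: "dc_adj E (fl x) y = dc_adj E x (fl y)"
  by (auto simp: dc_adj_def fl_def)

lemma deg_fl: "dc_deg E (fl x) = dc_deg E x"
proof -
  have "{y. dc_adj E (fl x) y} = fl ` {y. dc_adj E x y}"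
  proof (rule set_eqI)
    fix y
    have "y \<in> fl ` {y. dc_adj E x y} \<longleftrightarrow> fl y \<in> {y. dc_adj E x y}"
      by (metis fl_fl image_eqI imageE)
    then show "y \<in> {y. dc_adj E (fl x) y} \<longleftrightarrow> y \<in> fl ` {y. dc_adj E x y}"
      by (simp add: adj_fl)
  qed
  then show ?thesis unfolding dc_deg_def
    using card_image[OF inj_on_subset[OF inj_fl subset_UNIV]] by simp
qed

lemma W_fl: "lazy_walk E (fl x) (fl y) = lazy_walk E x y"
  unfolding lazy_walk_def by (simp add: deg_fl adj_fl) (metis fl_fl)

lemma W_nonneg: "0 \<le> lazy_walk E x y"
  unfolding lazy_walk_def dc_deg_def by auto

lemma W_row: "(\<Sum>y\<in>UNIV. lazy_walk (E::'v::finite \<Rightarrow> 'v \<Rightarrow> bool) x y) \<le> 1"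
proof -
  have s1: "(\<Sum>y\<in>UNIV. (if x = y then 1 else 0::real)) = 1" by simp
  have s2: "(\<Sum>y\<in>UNIV. (if dc_adj E x y then 1 else 0::real) / dc_deg E x)
      = real (card {y. dc_adj E x y}) / dc_deg E x"
    by (simp add: sum_divide_distrib[symmetric] sum.If_cases)
  have s3: "real (card {y. dc_adj E x y}) / dc_deg E x \<le> 1"
    unfolding dc_deg_def by (cases "card {y. dc_adj E x y} = 0") auto
  have "(\<Sum>y\<in>UNIV. lazy_walk E x y) = 1/2 * ((\<Sum>y\<in>UNIV. (if x = y then 1 else 0::real))
      + (\<Sum>y\<in>UNIV. (if dc_adj E x y then 1 else 0::real) / dc_deg E x))"
    unfolding lazy_walk_def by (simp only: sum.distrib[symmetric] sum_distrib_left)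
  then show ?thesis using s1 s2 s3 by simp
qed

lemma pr_eq:
  fixes E :: "'v::finite \<Rightarrow> 'v \<Rightarrow> bool"
  assumes "0 < \<alpha>" "\<alpha> \<le> 1"
  shows "pagerank E \<alpha> s x = \<alpha> * s x + (1 - \<alpha>) * vecmat (pagerank E \<alpha> s) (lazy_walk E) x"
proof -
  have "\<exists>!pr. \<forall>x. pr x = \<alpha> * s x + (1 - \<alpha>) * vecmat pr (lazy_walk E) x"
    by (rule fix_ex1) (use assms W_nonneg W_row in auto)
  from theI'[OF this] show ?thesis unfolding pagerank_def by blast
qed

lemma vecmat_diff: "vecmat (\<lambda>x. p x - q x) M y = vecmat p M y - vecmat q M y"
  unfolding vecmat_def by (simp add: left_diff_distrib sum_subtractf)

lemma simp_fl: "simplify a x = max 0 (a x - a (fl x))"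
  by (cases x) (simp add: simplify_def fl_def)

lemma main_gen:
  fixes E :: "'v::finite \<Rightarrow> 'v \<Rightarrow> bool"
  assumes alpha: "0 < \<alpha>" "\<alpha> \<le> 1"
    and s_nonneg: "\<forall>x. 0 \<le> s x"
    and r_nonneg: "\<forall>x. 0 \<le> r x"
  shows "simplify (apr E \<alpha> s r) y \<le> \<alpha> * (s y + r (fl y))
      + (1 - \<alpha>) * vecmat (simplify (apr E \<alpha> s r)) (lazy_walk E) y"
proof -
  define a where "a = apr E \<alpha> s r"
  define W where "W = lazy_walk E"
  define \<sigma> where "\<sigma> = simplify a"
  have aeq: "\<And>x. a x = \<alpha> * (s x - r x) + (1-\<alpha>) * vecmat a W x"
    unfolding a_def apr_def W_def
    using pr_eq[OF alpha, of E s] pr_eq[OF alpha, of E r]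
    by (simp add: vecmat_diff algebra_simps)
  have sig0: "\<And>x. 0 \<le> \<sigma> x" unfolding \<sigma>_def simp_fl by simp
  have sigW0: "0 \<le> vecmat \<sigma> W y" unfolding vecmat_def W_def
    using sig0 W_nonneg by (meson mult_nonneg_nonneg sum_nonneg)
  have re: "vecmat a W (fl y) = (\<Sum>x\<in>UNIV. a (fl x) * W x y)"
  proof -
    have "vecmat a W (fl y) = (\<Sum>x\<in>fl ` UNIV. a x * W x (fl y))"
    proof -
      have e: "fl ` UNIV = UNIV" by (metis fl_fl surjI)
      show ?thesis unfolding vecmat_def by (simp only: e)
    qed
    also have "\<dots> = (\<Sum>x\<in>UNIV. a (fl x) * W (fl x) (fl y))"
      by (subst sum.reindex[OF inj_fl]) (simp add: comp_def)
    also have "\<dots> = (\<Sum>x\<in>UNIV. a (fl x) * W x y)" unfolding W_def W_fl ..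
    finally show ?thesis .
  qed
  have key: "vecmat a W y - vecmat a W (fl y) \<le> vecmat \<sigma> W y"
  proof -
    have "vecmat a W y - vecmat a W (fl y) = (\<Sum>x\<in>UNIV. (a x - a (fl x)) * W x y)"
      by (subst re, unfold vecmat_def) (simp add: left_diff_distrib sum_subtractf)
    also have "\<dots> \<le> (\<Sum>x\<in>UNIV. \<sigma> x * W x y)"
      by (rule sum_mono, rule mult_right_mono) (auto simp: \<sigma>_def simp_fl W_def W_nonneg)
    finally show ?thesis by (simp add: vecmat_def)
  qed
  show ?thesis
  proof (cases "a y - a (fl y) \<le> 0")
    case True
    then have "\<sigma> y = 0" unfolding \<sigma>_def simp_fl by simp
    then show ?thesis
    proof -
      have "0 \<le> s y + r (fl y)" using s_nonneg r_nonneg by (meson add_nonneg_nonneg)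
      then have "0 \<le> \<alpha> * (s y + r (fl y))" using alpha by simp
      moreover have "0 \<le> (1-\<alpha>) * vecmat \<sigma> W y" using alpha sigW0 by simp
      ultimately show ?thesis using \<open>\<sigma> y = 0\<close> unfolding \<sigma>_def a_def W_def by linarith
    qed
  next
    case False
    then have "\<sigma> y = a y - a (fl y)" unfolding \<sigma>_def simp_fl by simp
    also have "\<dots> = \<alpha> * (s y - r y - s (fl y) + r (fl y)) + (1-\<alpha>) * (vecmat a W y - vecmat a W (fl y))"
      using aeq[of y] aeq[of "fl y"] by (simp add: algebra_simps)
    also have "\<dots> \<le> \<alpha> * (s y + r (fl y)) + (1-\<alpha>) * vecmat \<sigma> W y"
    proof -
      have "\<alpha> * (s y - r y - s (fl y) + r (fl y)) \<le> \<alpha> * (s y + r (fl y))"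
        using alpha s_nonneg[rule_format, of "fl y"] r_nonneg[rule_format, of y]
        by (intro mult_left_mono) linarith+
      moreover have "(1-\<alpha>) * (vecmat a W y - vecmat a W (fl y)) \<le> (1-\<alpha>) * vecmat \<sigma> W y"
        using alpha key by (intro mult_left_mono) auto
      ultimately show ?thesis by linarith
    qed
    finally show ?thesis unfolding \<sigma>_def a_def W_def .
  qed
qed

theorem lemma5:
  fixes E :: "'v::finite \<Rightarrow> 'v \<Rightarrow> bool"
    and \<alpha> :: real and s r :: "'v \<times> bool \<Rightarrow> real"
  assumes undirected: "\<forall>u v. E u v = E v u"
    and alpha: "0 < \<alpha>" "\<alpha> \<le> 1"
    and s_nonneg: "\<forall>x. 0 \<le> s x"
    and r_nonneg: "\<forall>x. 0 \<le> r x"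
  shows "\<forall>u. simplify (apr E \<alpha> s r) (u, False)
              \<le> \<alpha> * (s (u, False) + r (u, True))
                + (1 - \<alpha>) * vecmat (simplify (apr E \<alpha> s r)) (lazy_walk E) (u, False)
          \<and> simplify (apr E \<alpha> s r) (u, True)
              \<le> \<alpha> * (s (u, True) + r (u, False))
                + (1 - \<alpha>) * vecmat (simplify (apr E \<alpha> s r)) (lazy_walk E) (u, True)"
proof (intro allI conjI)
  fix u :: 'v
  have f1: "fl (u, False) = (u, True)" and f2: "fl (u, True) = (u, False)" by (simp_all add: fl_def)
  show "simplify (apr E \<alpha> s r) (u, False)
              \<le> \<alpha> * (s (u, False) + r (u, True))
                + (1 - \<alpha>) * vecmat (simplify (apr E \<alpha> s r)) (lazy_walk E) (u, False)"
    using main_gen[OF alpha s_nonneg r_nonneg, of E "(u, False)"] unfolding f1 .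
  show "simplify (apr E \<alpha> s r) (u, True)
              \<le> \<alpha> * (s (u, True) + r (u, False))
                + (1 - \<alpha>) * vecmat (simplify (apr E \<alpha> s r)) (lazy_walk E) (u, True)"
    using main_gen[OF alpha s_nonneg r_nonneg, of E "(u, True)"] unfolding f2 .
qed

end
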